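(* Let $0<\eta<1$, set $\gamma_0=0$ and $\gamma_j=(1+\eta\gamma_{j-1}^2)/2$ for $j\ge1$. Then $(\gamma_j)_{j\ge0}$ is an infinite $g$-sequence. Moreover, with $\varepsilon=1-\eta$, the limit $L_\varepsilon=\lim_{j\to\infty}\gamma_j$ exists, $L_\varepsilon=\dfrac{1}{1+\sqrt\varepsilon}$, and for every $j\ge0$, \[ L_\varepsilon-\gamma_j\le L_\varepsilon(1-\sqrt\varepsilon)^j. \]
   Context: An infinite $g$-sequence is a sequence $(\gamma_k)_{k\ge0}$ with $\gamma_0=0$, $\gamma_1=1/2$ and, for every $k\ge1$, $0<\gamma_k<1$ and $\gamma_k<\gamma_{k+1}<(1+\gamma_k^2)/2$. *)

theory Defs
  imports Complex_Main
begin

definition infinite_g_sequence :: "(nat \<Rightarrow> real) \<Rightarrow> bool" where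
  "infinite_g_sequence \<gamma> \<longleftrightarrow>
     \<gamma> 0 = 0 \<and> \<gamma> 1 = 1/2 \<and>
     (\<forall>k\<ge>1. 0 < \<gamma> k \<and> \<gamma> k < 1 \<and> \<gamma> k < \<gamma> (Suc k) \<and> \<gamma> (Suc k) < (1 + (\<gamma> k)^2) / 2)"

fun eta_seq :: "real \<Rightarrow> nat \<Rightarrow> real" where
  "eta_seq \<eta> 0 = 0"
| "eta_seq \<eta> (Suc j) = (1 + \<eta> * (eta_seq \<eta> j)^2) / 2"

end

theory Submission
  imports Defs
begin

theorem mainTheorem13:
  fixes \<eta> :: real
  assumes "0 < \<eta>" and "\<eta> < 1"
  defines "\<epsilon> \<equiv> 1 - \<eta>"
  shows "infinite_g_sequence (eta_seq \<eta>)
    \<and> (\<exists>L. eta_seq \<eta> \<longlonglongrightarrow> L \<and> L = 1 / (1 + sqrt \<epsilon>)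
         \<and> (\<forall>j. L - eta_seq \<eta> j \<le> L * (1 - sqrt \<epsilon>) ^ j))"
proof -
  define s where "s = sqrt \<epsilon>"
  define L where "L = 1 / (1 + s)"
  let ?g = "eta_seq \<eta>"
  have s0: "0 < s" and s1: "s < 1" using assms by (auto simp: s_def \<epsilon>_def)
  have ss: "s^2 = 1 - \<eta>" using assms by (simp add: s_def \<epsilon>_def)
  have eta: "\<eta> = (1-s)*(1+s)" using ss by (simp add: algebra_simps power2_eq_square)
  have L1: "L < 1" "0 < L" using s0 by (auto simp: L_def)
  have etaL: "\<eta> * L = 1 - s" using s0 by (simp add: eta L_def)
  have fixL: "(1 + \<eta> * L^2)/2 = L" using s0
  proof -
    have d: "(1+s)^2 > 0" using s0 by simp
    have "(1 + \<eta> * L^2)/2 = ((1+s)^2 + (1-s)*(1+s)) / (2*(1+s)^2)"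
      using d by (simp add: eta L_def field_simps power2_eq_square)
    also have "\<dots> = (2*(1+s)) / (2*(1+s)^2)" by (simp add: algebra_simps power2_eq_square)
    also have "\<dots> = L" using s0 by (simp add: L_def power2_eq_square field_simps) (smt (verit) mult_pos_pos s0)
    finally show ?thesis .
  qed
  have bnd: "0 \<le> ?g j \<and> ?g j < L" for j
  proof (induction j)
    case 0 then show ?case using L1 by simp
  next
    case (Suc j)
    have "?g j ^2 < L^2" using Suc by (simp add: power_strict_mono)
    hence "\<eta> * ?g j ^2 < \<eta> * L^2" using assms by simp
    hence "?g (Suc j) < L" using fixL by simp
    moreover have "0 \<le> ?g (Suc j)" using assms by simp
    ultimately show ?case by simp
  qed
  have inc: "?g j < ?g (Suc j)" for j
  proof -
    let ?x = "?g j"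
    have a: "(1+s)*?x < 1" using bnd[of j] s0 by (simp add: L_def field_simps)
    have b: "(1-s)*?x < 1" using bnd[of j] L1 s1 s0
      by (smt (verit) mult_left_le_one_le)
    have "0 < (1-(1+s)*?x)*(1-(1-s)*?x)" using a b by simp
    also have "\<dots> = \<eta>*?x^2 - 2*?x + 1" by (simp add: eta algebra_simps power2_eq_square)
    finally show ?thesis by simp
  qed
  have mono: "?g 1 \<le> ?g k" if "k \<ge> 1" for k
    using that
  proof (induction k rule: dec_induct)
    case base then show ?case by simp
  next
    case (step n) then show ?case using inc[of n] by simp
  qed
  have err: "L - ?g j \<le> L * (1 - s) ^ j" for j
  proof (induction j)
    case 0 then show ?case by simp
  next
    case (Suc j)
    let ?x = "?g j"
    have "L - ?g (Suc j) = \<eta> * (L - ?x) * (L + ?x) / 2"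
    proof -
      have "L - ?g (Suc j) = (1 + \<eta> * L^2)/2 - (1 + \<eta> * ?x^2)/2" using fixL by simp
      also have "\<dots> = \<eta> * (L - ?x) * (L + ?x) / 2" by (simp add: field_simps power2_eq_square)
      finally show ?thesis .
    qed
    also have "\<dots> \<le> \<eta> * (L - ?x) * (2*L) / 2"
      using bnd[of j] assms by (intro divide_right_mono mult_left_mono) auto
    also have "\<dots> = (1-s) * (L - ?x)" proof - have "\<eta> * (L - ?x) * (2*L) / 2 = (\<eta>*L) * (L - ?x)" by (simp add: field_simps) then show ?thesis using etaL by simp qed
    also have "\<dots> \<le> (1-s) * (L * (1-s)^j)" using Suc s1 by (intro mult_left_mono) auto
    finally show ?case by (simp add: algebra_simps)
  qed
  have g1: "?g 1 = 1/2" by simp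
  have gseq: "infinite_g_sequence ?g"
    unfolding infinite_g_sequence_def
  proof (intro conjI allI impI)
    fix k :: nat assume k: "k \<ge> 1"
    have p: "0 < ?g k" using mono[OF k] g1 by simp
    show "0 < ?g k" by fact
    show "?g k < 1" using bnd[of k] L1 by simp
    show "?g k < ?g (Suc k)" by (rule inc)
    have "\<eta> * ?g k ^2 < ?g k ^2" using assms p by simp
    then show "?g (Suc k) < (1 + ?g k ^2)/2" by simp
  qed simp_all
  have lim: "?g \<longlonglongrightarrow> L"
  proof -
    have "(\<lambda>j. L * (1-s)^j) \<longlonglongrightarrow> L * 0"
      by (intro tendsto_mult tendsto_const LIMSEQ_power_zero) (use s0 s1 in auto)
    hence z: "(\<lambda>j. L * (1-s)^j) \<longlonglongrightarrow> 0" by simp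
    have "(\<lambda>j. L - ?g j) \<longlonglongrightarrow> 0"
    proof (rule tendsto_sandwich[OF _ _ tendsto_const z])
      show "\<forall>\<^sub>F n in sequentially. 0 \<le> L - ?g n" using bnd by (auto intro: always_eventually less_imp_le)
      show "\<forall>\<^sub>F n in sequentially. L - ?g n \<le> L * (1-s)^n" using err by auto
    qed
    hence "(\<lambda>j. L - (L - ?g j)) \<longlonglongrightarrow> L - 0" by (intro tendsto_diff tendsto_const)
    thus ?thesis by simp
  qed
  show ?thesis using gseq lim err by (auto simp: L_def s_def)
qed

end
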